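(* Let $\omega_1,\dots,\omega_n$ be positive reals with $\sum_{k\in[n]}\omega_k=1$ and $r_1,\dots,r_n$ positive reals. For each $k$ let $\theta_k=\arccos(\omega_k/2)$, so $\omega_k=e^{i\theta_k}+e^{-i\theta_k}$, and set $a_{k,j}=r_ke^{ij\theta_k}$ for $(k,j)\in[n]\times\{\pm1\}$. Then: (1) ${}^{\infty,0}\!\sum_{(k,j)}a_{k,j}=\max\{|r_k|:k\in[n]\}$; (2) ${}^{-\infty,0}\!\sum_{(k,j)}a_{k,j}=\min\{|r_k|:k\in[n]\}$; (3) ${}^{0,0}\!\sum_{(k,j)}a_{k,j}=\prod_{k\in[n]}r_k^{\omega_k}$; (4) for every real $\alpha\neq0$, ${}^{\alpha}\!\sum_{(k,j)}a_{k,j}=\big(\sum_{k\in[n]}\omega_kr_k^\alpha\big)^{1/\alpha}$.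
   Context: For $\alpha\in\mathbb{C}\setminus i\mathbb{R}$, $\epsilon_\alpha(0)=0$ and $\epsilon_\alpha(rs)=r^\alpha s$ for $r>0$, $|s|=1$; it is a bijection of $\mathbb{C}$. For a finite family $(a_t)$ in $\mathbb{C}$: ${}^{\alpha}\!\sum_t a_t:=\epsilon_\alpha^{-1}\big(\sum_t\epsilon_\alpha(a_t)\big)$; ${}^{\infty,0}\!\sum_ta_t:=\lim_{\alpha\to+\infty}{}^{\alpha}\!\sum_ta_t$ and ${}^{0,0}\!\sum_ta_t:=\lim_{\alpha\to0^+}{}^{\alpha}\!\sum_ta_t$ (limits over real $\alpha>0$); ${}^{-\infty,0}\!\sum_ta_t:=\lim_{\alpha\to-\infty}{}^{\alpha}\!\sum_ta_t$ (limit over real $\alpha<0$). *)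

theory Defs
  imports "HOL-Analysis.Analysis"
begin

definition eps :: "complex \<Rightarrow> complex \<Rightarrow> complex" where
  "eps \<alpha> z = (if z = 0 then 0 else (complex_of_real (cmod z)) powr \<alpha> * sgn z)"

definition alpha_sum :: "complex \<Rightarrow> 'a set \<Rightarrow> ('a \<Rightarrow> complex) \<Rightarrow> complex" where
  "alpha_sum \<alpha> A a = (THE w. eps \<alpha> w = (\<Sum>t\<in>A. eps \<alpha> (a t)))"

end

theory Submission
  imports Defs
begin

lemma eps_real_inv:
  fixes \<alpha> S :: real
  assumes "\<alpha> \<noteq> 0" "S > 0"
  shows "(THE w. eps (of_real \<alpha>) w = of_real S) = of_real (S powr (1/\<alpha>))"
proof (rule the_equality)
  have "S powr (1/\<alpha>) > 0" using assms by simp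
  then show "eps (of_real \<alpha>) (of_real (S powr (1/\<alpha>))) = of_real S"
    using assms by (simp add: eps_def powr_of_real powr_powr sgn_of_real)
next
  fix w assume h: "eps (of_real \<alpha>) w = of_real S"
  have w0: "w \<noteq> 0" using h assms by (auto simp: eps_def)
  have e: "of_real (cmod w powr \<alpha>) * sgn w = of_real S"
    using h w0 by (simp add: eps_def powr_of_real)
  have "cmod (of_real (cmod w powr \<alpha>) * sgn w) = cmod w powr \<alpha>"
    using w0 by (simp add: norm_mult norm_sgn)
  hence n: "cmod w powr \<alpha> = S" using e assms by simp
  hence cw: "cmod w = S powr (1/\<alpha>)" using assms
    by (metis norm_ge_zero powr_powr powr_one divide_self_if mult.commute times_divide_eq_left mult_1)
  have "sgn w = 1" using e n assms by (simp add: field_simps)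
  have "w = of_real (cmod w) * sgn w" using w0 by (simp add: complex_sgn_def scaleR_conv_of_real field_simps)
  then show "w = of_real (S powr (1/\<alpha>))" using cw \<open>sgn w = 1\<close> by simp
qed

lemma sum_eval:
  fixes n :: nat and \<omega> r :: "nat \<Rightarrow> real" and \<alpha> :: real
  assumes \<omega>_pos: "\<forall>k\<in>{1..n}. \<omega> k > 0"
    and \<omega>_sum: "(\<Sum>k\<in>{1..n}. \<omega> k) = 1"
    and r_pos: "\<forall>k\<in>{1..n}. r k > 0"
  shows "(\<Sum>t\<in>{1..n} \<times> {-1, 1::int}. eps (of_real \<alpha>) ((\<lambda>(k, j::int). complex_of_real (r k) * exp (\<i> * of_int j * complex_of_real (arccos (\<omega> k / 2)))) t))
     = of_real (\<Sum>k\<in>{1..n}. \<omega> k * r k powr \<alpha>)"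
proof -
  have le: "\<omega> k \<le> 1" if "k \<in> {1..n}" for k
  proof -
    have "\<omega> k \<le> (\<Sum>k\<in>{1..n}. \<omega> k)"
      by (rule member_le_sum) (use \<omega>_pos that in \<open>auto intro: less_imp_le simp del: atLeastAtMost_iff\<close>)
    then show ?thesis using \<omega>_sum by simp
  qed
  have one: "eps (of_real \<alpha>) (complex_of_real (r k) * exp (\<i> * of_int j * complex_of_real \<theta>))
      = of_real (r k powr \<alpha>) * exp (\<i> * of_int j * complex_of_real \<theta>)" if "k \<in> {1..n}" for k j \<theta>
  proof -
    have rk: "r k > 0" using r_pos that by auto
    have ne: "norm (exp (\<i> * of_int j * complex_of_real \<theta>)) = 1"
      by (metis exp_of_real norm_exp_i_times mult.assoc mult.commute of_real_of_int_eq of_real_mult)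
    have "cmod (complex_of_real (r k) * exp (\<i> * of_int j * complex_of_real \<theta>)) = r k"
      using rk ne by (simp add: norm_mult)
    moreover have "sgn (complex_of_real (r k) * exp (\<i> * of_int j * complex_of_real \<theta>)) = exp (\<i> * of_int j * complex_of_real \<theta>)"
    proof -
      have "sgn (exp (\<i> * of_int j * complex_of_real \<theta>)) = exp (\<i> * of_int j * complex_of_real \<theta>)"
        unfolding complex_sgn_def ne by simp
      then show ?thesis using rk by (simp add: sgn_mult sgn_of_real)
    qed
    ultimately show ?thesis using rk by (simp add: eps_def powr_of_real)
  qed
  have two: "exp (\<i> * of_int (-1) * complex_of_real (arccos (\<omega> k / 2))) + exp (\<i> * of_int 1 * complex_of_real (arccos (\<omega> k / 2)))
      = of_real (\<omega> k)" if "k \<in> {1..n}" for k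
  proof -
    have "\<omega> k > 0" using \<omega>_pos that by blast
    then have "-1 \<le> \<omega> k / 2" "\<omega> k / 2 \<le> 1" using le[OF that] by auto
    hence c: "cos (arccos (\<omega> k / 2)) = \<omega> k / 2" by (simp add: cos_arccos)
    have "cos (complex_of_real (arccos (\<omega> k / 2))) = of_real (\<omega> k / 2)"
      by (simp add: cos_of_real c)
    then show ?thesis by (simp add: cos_exp_eq add.commute) (metis distrib_right mult_cancel_right zero_neq_numeral)
  qed
  have "(\<Sum>t\<in>{1..n} \<times> {-1, 1::int}. eps (of_real \<alpha>) ((\<lambda>(k, j::int). complex_of_real (r k) * exp (\<i> * of_int j * complex_of_real (arccos (\<omega> k / 2)))) t))
     = (\<Sum>k\<in>{1..n}. \<Sum>j\<in>{-1,1::int}. eps (of_real \<alpha>) (complex_of_real (r k) * exp (\<i> * of_int j * complex_of_real (arccos (\<omega> k / 2)))))"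
    by (subst sum.cartesian_product) (rule sum.cong, auto)
  also have "\<dots> = (\<Sum>k\<in>{1..n}. of_real (\<omega> k * r k powr \<alpha>))"
  proof (rule sum.cong[OF refl])
    fix k assume k: "k \<in> {1..n}"
    have "(\<Sum>j\<in>{-1,1::int}. eps (of_real \<alpha>) (complex_of_real (r k) * exp (\<i> * of_int j * complex_of_real (arccos (\<omega> k / 2)))))
       = of_real (r k powr \<alpha>) * (exp (\<i> * of_int (-1) * complex_of_real (arccos (\<omega> k / 2))) + exp (\<i> * of_int 1 * complex_of_real (arccos (\<omega> k / 2))))"
      by (simp add: one[OF k] distrib_left del: of_int_minus of_int_1)
    also have "\<dots> = of_real (\<omega> k * r k powr \<alpha>)" using two[OF k] by simp
    finally show "(\<Sum>j\<in>{-1,1::int}. eps (of_real \<alpha>) (complex_of_real (r k) * exp (\<i> * of_int j * complex_of_real (arccos (\<omega> k / 2))))) = of_real (\<omega> k * r k powr \<alpha>)" .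
  qed
  finally show ?thesis by simp
qed

lemma lim_top:
  fixes K :: "nat set" and \<omega> r :: "nat \<Rightarrow> real"
  assumes fin: "finite K" and wpos: "\<And>k. k \<in> K \<Longrightarrow> \<omega> k > 0"
    and wsum: "(\<Sum>k\<in>K. \<omega> k) = 1" and rpos: "\<And>k. k \<in> K \<Longrightarrow> r k > 0"
    and k0: "k0 \<in> K" and R: "\<And>k. k \<in> K \<Longrightarrow> r k \<le> r k0"
  shows "((\<lambda>\<alpha>. (\<Sum>k\<in>K. \<omega> k * r k powr \<alpha>) powr (1/\<alpha>)) \<longlongrightarrow> r k0) at_top"
proof (rule tendsto_sandwich)
  have r0: "r k0 > 0" using rpos k0 by auto
  have w0: "\<omega> k0 > 0" using wpos k0 by auto
  show "((\<lambda>\<alpha>. \<omega> k0 powr (1/\<alpha>) * r k0) \<longlongrightarrow> r k0) at_top"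
  proof -
    have "((\<lambda>\<alpha>::real. \<omega> k0 powr (1/\<alpha>) * r k0) \<longlongrightarrow> \<omega> k0 powr 0 * r k0) at_top"
      using w0 by (intro tendsto_intros tendsto_divide_0[OF tendsto_const filterlim_at_top_imp_at_infinity[OF filterlim_ident]]) auto
    then show ?thesis using w0 by simp
  qed
  show "((\<lambda>\<alpha>. r k0) \<longlongrightarrow> r k0) at_top" by simp
  show "\<forall>\<^sub>F \<alpha> in at_top. \<omega> k0 powr (1/\<alpha>) * r k0 \<le> (\<Sum>k\<in>K. \<omega> k * r k powr \<alpha>) powr (1/\<alpha>)"
    using eventually_gt_at_top[of 0]
  proof eventually_elim
    case (elim \<alpha>)
    have "\<omega> k0 * r k0 powr \<alpha> \<le> (\<Sum>k\<in>K. \<omega> k * r k powr \<alpha>)"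
      by (rule member_le_sum[where f="\<lambda>k. \<omega> k * r k powr \<alpha>"]) (use k0 fin in \<open>auto intro!: mult_nonneg_nonneg less_imp_le[OF wpos]\<close>)
    hence "(\<omega> k0 * r k0 powr \<alpha>) powr (1/\<alpha>) \<le> (\<Sum>k\<in>K. \<omega> k * r k powr \<alpha>) powr (1/\<alpha>)"
      using elim w0 r0 by (intro powr_mono2) auto
    moreover have "(\<omega> k0 * r k0 powr \<alpha>) powr (1/\<alpha>) = \<omega> k0 powr (1/\<alpha>) * r k0"
      using elim w0 r0 by (simp add: powr_mult powr_powr)
    ultimately show ?case by simp
  qed
  show "\<forall>\<^sub>F \<alpha> in at_top. (\<Sum>k\<in>K. \<omega> k * r k powr \<alpha>) powr (1/\<alpha>) \<le> r k0"
    using eventually_gt_at_top[of 0]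
  proof eventually_elim
    case (elim \<alpha>)
    have "(\<Sum>k\<in>K. \<omega> k * r k powr \<alpha>) \<le> (\<Sum>k\<in>K. \<omega> k * r k0 powr \<alpha>)"
      by (rule sum_mono, rule mult_left_mono, rule powr_mono2) (use elim R in \<open>auto intro: less_imp_le[OF rpos] less_imp_le[OF wpos]\<close>)
    also have "\<dots> = r k0 powr \<alpha>" using wsum by (simp add: sum_distrib_right[symmetric])
    finally have "(\<Sum>k\<in>K. \<omega> k * r k powr \<alpha>) powr (1/\<alpha>) \<le> (r k0 powr \<alpha>) powr (1/\<alpha>)"
      using elim by (intro powr_mono2) (auto intro!: sum_nonneg mult_nonneg_nonneg simp: less_imp_le wpos)
    then show ?case using elim r0 by (simp add: powr_powr)
  qed
qed

lemma lim_bot: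
  fixes K :: "nat set" and \<omega> r :: "nat \<Rightarrow> real"
  assumes fin: "finite K" and wpos: "\<And>k. k \<in> K \<Longrightarrow> \<omega> k > 0"
    and wsum: "(\<Sum>k\<in>K. \<omega> k) = 1" and rpos: "\<And>k. k \<in> K \<Longrightarrow> r k > 0"
    and k0: "k0 \<in> K" and R: "\<And>k. k \<in> K \<Longrightarrow> r k0 \<le> r k"
  shows "((\<lambda>\<alpha>. (\<Sum>k\<in>K. \<omega> k * r k powr \<alpha>) powr (1/\<alpha>)) \<longlongrightarrow> r k0) at_bot"
proof (rule tendsto_sandwich)
  have r0: "r k0 > 0" using rpos k0 by auto
  have w0: "\<omega> k0 > 0" using wpos k0 by auto
  show "((\<lambda>\<alpha>. r k0) \<longlongrightarrow> r k0) at_bot" by simp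
  show "((\<lambda>\<alpha>. \<omega> k0 powr (1/\<alpha>) * r k0) \<longlongrightarrow> r k0) at_bot"
  proof -
    have "((\<lambda>\<alpha>::real. \<omega> k0 powr (1/\<alpha>) * r k0) \<longlongrightarrow> \<omega> k0 powr 0 * r k0) at_bot"
      using w0 by (intro tendsto_intros tendsto_divide_0[OF tendsto_const filterlim_mono[OF filterlim_ident at_bot_le_at_infinity order_refl]]) auto
    then show ?thesis using w0 by simp
  qed
  show "\<forall>\<^sub>F \<alpha> in at_bot. (\<Sum>k\<in>K. \<omega> k * r k powr \<alpha>) powr (1/\<alpha>) \<le> \<omega> k0 powr (1/\<alpha>) * r k0"
    using eventually_gt_at_bot[of 0]
  proof eventually_elim
    case (elim \<alpha>)
    have "\<omega> k0 * r k0 powr \<alpha> \<le> (\<Sum>k\<in>K. \<omega> k * r k powr \<alpha>)"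
      by (rule member_le_sum[where f="\<lambda>k. \<omega> k * r k powr \<alpha>"]) (use k0 fin in \<open>auto intro!: mult_nonneg_nonneg less_imp_le[OF wpos]\<close>)
    hence "(\<Sum>k\<in>K. \<omega> k * r k powr \<alpha>) powr (1/\<alpha>) \<le> (\<omega> k0 * r k0 powr \<alpha>) powr (1/\<alpha>)"
      using elim w0 r0 by (intro powr_mono2') auto
    moreover have "(\<omega> k0 * r k0 powr \<alpha>) powr (1/\<alpha>) = \<omega> k0 powr (1/\<alpha>) * r k0"
      using elim w0 r0 by (simp add: powr_mult powr_powr)
    ultimately show ?case by simp
  qed
  show "\<forall>\<^sub>F \<alpha> in at_bot. r k0 \<le> (\<Sum>k\<in>K. \<omega> k * r k powr \<alpha>) powr (1/\<alpha>)"
    using eventually_gt_at_bot[of 0]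
  proof eventually_elim
    case (elim \<alpha>)
    have "(\<Sum>k\<in>K. \<omega> k * r k powr \<alpha>) \<le> (\<Sum>k\<in>K. \<omega> k * r k0 powr \<alpha>)"
      by (rule sum_mono, rule mult_left_mono, rule powr_mono2') (use elim R r0 in \<open>auto intro: less_imp_le[OF rpos] less_imp_le[OF wpos]\<close>)
    also have "\<dots> = r k0 powr \<alpha>" using wsum by (simp add: sum_distrib_right[symmetric])
    finally have le: "(\<Sum>k\<in>K. \<omega> k * r k powr \<alpha>) \<le> r k0 powr \<alpha>" .
    have pos: "(\<Sum>k\<in>K. \<omega> k * r k powr \<alpha>) > 0"
    proof -
      have "\<omega> k0 * r k0 powr \<alpha> \<le> (\<Sum>k\<in>K. \<omega> k * r k powr \<alpha>)"
        by (rule member_le_sum[where f="\<lambda>k. \<omega> k * r k powr \<alpha>"]) (use k0 fin in \<open>auto intro!: mult_nonneg_nonneg less_imp_le[OF wpos]\<close>)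
      moreover have "\<omega> k0 * r k0 powr \<alpha> > 0" using w0 r0 by simp
      ultimately show ?thesis by linarith
    qed
    have "(r k0 powr \<alpha>) powr (1/\<alpha>) \<le> (\<Sum>k\<in>K. \<omega> k * r k powr \<alpha>) powr (1/\<alpha>)"
      using elim le pos by (intro powr_mono2') auto
    then show ?case using elim r0 by (simp add: powr_powr)
  qed
qed

lemma lim_zero:
  fixes K :: "nat set" and \<omega> r :: "nat \<Rightarrow> real"
  assumes fin: "finite K" and wpos: "\<And>k. k \<in> K \<Longrightarrow> \<omega> k > 0"
    and wsum: "(\<Sum>k\<in>K. \<omega> k) = 1" and rpos: "\<And>k. k \<in> K \<Longrightarrow> r k > 0"
  shows "((\<lambda>\<alpha>. (\<Sum>k\<in>K. \<omega> k * r k powr \<alpha>) powr (1/\<alpha>)) \<longlongrightarrow> (\<Prod>k\<in>K. r k powr \<omega> k)) (at_right 0)"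
proof -
  define S where "S = (\<lambda>\<alpha>. \<Sum>k\<in>K. \<omega> k * r k powr \<alpha>)"
  define D where "D = (\<Sum>k\<in>K. \<omega> k * ln (r k))"
  have Kne: "K \<noteq> {}" using wsum by auto
  have Spos: "S \<alpha> > 0" for \<alpha>
    unfolding S_def
  proof (rule sum_pos[OF fin Kne])
    fix k assume k: "k \<in> K"
    have "\<omega> k > 0" "r k > 0" using wpos[OF k] rpos[OF k] by auto
    then show "\<omega> k * r k powr \<alpha> > 0" by simp
  qed
  have "S 0 = (\<Sum>k\<in>K. \<omega> k)" unfolding S_def
  proof (rule sum.cong[OF refl])
    fix k assume k: "k \<in> K"
    have "r k > 0" using rpos[OF k] .
    then show "\<omega> k * r k powr 0 = \<omega> k" by simp
  qed
  hence S0: "S 0 = 1" using wsum by simp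
  have dS: "(S has_real_derivative D) (at 0)"
  proof -
    have "(S has_real_derivative (\<Sum>k\<in>K. \<omega> k * (1 * ln (r k) * r k powr 0))) (at 0)"
      unfolding S_def
      by (intro DERIV_sum DERIV_cmult has_real_derivative_const_powr[where f="\<lambda>x. x"] DERIV_ident)
    moreover have "(\<Sum>k\<in>K. \<omega> k * (1 * ln (r k) * r k powr 0)) = D"
      unfolding D_def
    proof (rule sum.cong[OF refl])
      fix k assume k: "k \<in> K"
      have "r k > 0" using rpos[OF k] .
      then show "\<omega> k * (1 * ln (r k) * r k powr 0) = \<omega> k * ln (r k)" by simp
    qed
    ultimately show ?thesis by simp
  qed
  have dl: "((\<lambda>\<alpha>. ln (S \<alpha>)) has_real_derivative (1 / S 0 * D)) (at 0)"
    by (rule DERIV_chain2[OF DERIV_ln_divide[OF Spos] dS])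
  hence "((\<lambda>y. (ln (S y) - ln (S 0)) / (y - 0)) \<longlongrightarrow> 1 / S 0 * D) (at 0)"
    unfolding has_field_derivative_iff .
  hence "((\<lambda>y. ln (S y) / y) \<longlongrightarrow> D) (at 0)"
    unfolding S0 by simp
  hence "((\<lambda>y. ln (S y) / y) \<longlongrightarrow> D) (at_right 0)"
    by (rule tendsto_mono[OF at_le[OF subset_UNIV]])
  hence lim0: "((\<lambda>y. exp (ln (S y) / y)) \<longlongrightarrow> exp D) (at_right 0)"
    by (rule tendsto_exp)
  have "exp D = (\<Prod>k\<in>K. r k powr \<omega> k)"
    unfolding D_def exp_sum[OF fin]
  proof (rule prod.cong[OF refl])
    fix k assume k: "k \<in> K"
    have "r k > 0" using rpos[OF k] .
    then show "exp (\<omega> k * ln (r k)) = r k powr \<omega> k" by (simp add: powr_def mult.commute)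
  qed
  with lim0 have lim: "((\<lambda>y. exp (ln (S y) / y)) \<longlongrightarrow> (\<Prod>k\<in>K. r k powr \<omega> k)) (at_right 0)"
    by simp
  have ev: "\<forall>\<^sub>F y in at_right 0. exp (ln (S y) / y) = S y powr (1/y)"
  proof (intro always_eventually allI)
    fix y
    have "S y \<noteq> 0" using Spos[of y] by simp
    then show "exp (ln (S y) / y) = S y powr (1/y)" by (simp add: powr_def)
  qed
  have "((\<lambda>y. S y powr (1/y)) \<longlongrightarrow> (\<Prod>k\<in>K. r k powr \<omega> k)) (at_right 0)"
    by (rule iffD1[OF tendsto_cong[OF ev] lim])
  then show ?thesis unfolding S_def .
qed

theorem proposition10p1:
  fixes n :: nat and \<omega> r :: "nat \<Rightarrow> real"
  assumes \<omega>_pos: "\<forall>k\<in>{1..n}. \<omega> k > 0"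
    and \<omega>_sum: "(\<Sum>k\<in>{1..n}. \<omega> k) = 1"
    and r_pos: "\<forall>k\<in>{1..n}. r k > 0"
  defines "a \<equiv> (\<lambda>(k, j::int). complex_of_real (r k) * exp (\<i> * of_int j * complex_of_real (arccos (\<omega> k / 2))))"
    and "I \<equiv> {1..n} \<times> {-1, 1::int}"
  shows "(((\<lambda>\<alpha>::real. alpha_sum (complex_of_real \<alpha>) I a)
            \<longlongrightarrow> complex_of_real (Max {\<bar>r k\<bar> | k. k \<in> {1..n}})) at_top)
    \<and> (((\<lambda>\<alpha>::real. alpha_sum (complex_of_real \<alpha>) I a)
            \<longlongrightarrow> complex_of_real (Min {\<bar>r k\<bar> | k. k \<in> {1..n}})) at_bot)
    \<and> (((\<lambda>\<alpha>::real. alpha_sum (complex_of_real \<alpha>) I a)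
            \<longlongrightarrow> complex_of_real (\<Prod>k\<in>{1..n}. r k powr \<omega> k)) (at_right 0))
    \<and> (\<forall>\<alpha>::real. \<alpha> \<noteq> 0 \<longrightarrow> alpha_sum (complex_of_real \<alpha>) I a
            = complex_of_real ((\<Sum>k\<in>{1..n}. \<omega> k * r k powr \<alpha>) powr (1 / \<alpha>)))"
proof -
  define M where "M = (\<lambda>\<alpha>::real. (\<Sum>k\<in>{1..n}. \<omega> k * r k powr \<alpha>) powr (1/\<alpha>))"
  have wpos: "\<And>k. k \<in> {1..n} \<Longrightarrow> \<omega> k > 0" using \<omega>_pos by blast
  have rpos: "\<And>k. k \<in> {1..n} \<Longrightarrow> r k > 0" using r_pos by blast
  have ne: "{1..n} \<noteq> {}" by (metis \<omega>_sum sum.empty zero_neq_one)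
  have Spos: "(\<Sum>k\<in>{1..n}. \<omega> k * r k powr \<alpha>) > 0" for \<alpha>
  proof -
    have "\<omega> k * r k powr \<alpha> > 0" if "k \<in> {1..n}" for k
    proof -
      have "\<omega> k > 0" "r k > 0" using wpos rpos that by auto
      then show ?thesis by simp
    qed
    then show ?thesis using ne by (intro sum_pos) auto
  qed
  have eq: "alpha_sum (of_real \<alpha>) I a = of_real (M \<alpha>)" if "\<alpha> \<noteq> 0" for \<alpha>
    unfolding alpha_sum_def I_def a_def sum_eval[OF \<omega>_pos \<omega>_sum r_pos] M_def
    by (rule eps_real_inv[OF that Spos])
  have ev: "\<forall>\<^sub>F \<alpha> in F. of_real (M \<alpha>) = alpha_sum (of_real \<alpha>) I a"
    if "\<forall>\<^sub>F \<alpha> in F. \<alpha> \<noteq> 0" for F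
    using that by eventually_elim (simp add: eq)
  have "{\<bar>r k\<bar> | k. k \<in> {1..n}} = (\<lambda>k. \<bar>r k\<bar>) ` {1..n}" by (simp only: Setcompr_eq_image)
  also have "\<dots> = r ` {1..n}"
  proof (rule image_cong[OF refl])
    fix k assume k: "k \<in> {1..n}"
    show "\<bar>r k\<bar> = r k" using rpos[OF k] by simp
  qed
  finally have setr: "{\<bar>r k\<bar> | k. k \<in> {1..n}} = r ` {1..n}" .
  have fin: "finite (r ` {1..n})" by simp
  obtain k0 where k0: "k0 \<in> {1..n}" "r k0 = Max (r ` {1..n})"
  proof -
    have "Max (r ` {1..n}) \<in> r ` {1..n}" by (rule Max_in[OF fin]) (use ne in simp)
    then obtain k where "k \<in> {1..n}" "Max (r ` {1..n}) = r k" by blast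
    then show ?thesis using that by simp
  qed
  obtain k1 where k1: "k1 \<in> {1..n}" "r k1 = Min (r ` {1..n})"
  proof -
    have "Min (r ` {1..n}) \<in> r ` {1..n}" by (rule Min_in[OF fin]) (use ne in simp)
    then obtain k where "k \<in> {1..n}" "Min (r ` {1..n}) = r k" by blast
    then show ?thesis using that by simp
  qed
  have fin2: "finite {1..n}" by simp
  have R0: "r k \<le> r k0" if "k \<in> {1..n}" for k
    unfolding k0(2) by (rule Max_ge[OF fin]) (rule imageI[OF that])
  have R1: "r k1 \<le> r k" if "k \<in> {1..n}" for k
    unfolding k1(2) by (rule Min_le[OF fin]) (rule imageI[OF that])
  have T0: "((\<lambda>\<alpha>. of_real (M \<alpha>)) \<longlongrightarrow> complex_of_real (r k0)) at_top"
    unfolding M_def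
    using lim_top[where K="{1..n}" and \<omega>=\<omega> and r=r, OF fin2 wpos \<omega>_sum rpos k0(1) R0] by (rule tendsto_of_real)
  hence L1: "((\<lambda>\<alpha>::real. alpha_sum (complex_of_real \<alpha>) I a)
            \<longlongrightarrow> complex_of_real (Max {\<bar>r k\<bar> | k. k \<in> {1..n}})) at_top"
  proof -
    have E: "\<forall>\<^sub>F \<alpha> in at_top. (\<alpha>::real) \<noteq> 0"
      using eventually_gt_at_top[of "0::real"] by eventually_elim simp
    have mx: "Max {\<bar>r k\<bar> | k. k \<in> {1..n}} = r k0" using setr k0(2) by simp
    show ?thesis unfolding mx by (rule iffD1[OF tendsto_cong[OF ev[OF E]] T0])
  qed
  have T1: "((\<lambda>\<alpha>. of_real (M \<alpha>)) \<longlongrightarrow> complex_of_real (r k1)) at_bot"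
    unfolding M_def
    using lim_bot[where K="{1..n}" and \<omega>=\<omega> and r=r, OF fin2 wpos \<omega>_sum rpos k1(1) R1] by (rule tendsto_of_real)
  hence L2: "((\<lambda>\<alpha>::real. alpha_sum (complex_of_real \<alpha>) I a)
            \<longlongrightarrow> complex_of_real (Min {\<bar>r k\<bar> | k. k \<in> {1..n}})) at_bot"
  proof -
    have E: "\<forall>\<^sub>F \<alpha> in at_bot. (\<alpha>::real) \<noteq> 0"
      using eventually_gt_at_bot[of "0::real"] by eventually_elim simp
    have mx: "Min {\<bar>r k\<bar> | k. k \<in> {1..n}} = r k1" using setr k1(2) by simp
    show ?thesis unfolding mx by (rule iffD1[OF tendsto_cong[OF ev[OF E]] T1])
  qed
  have T2: "((\<lambda>\<alpha>. of_real (M \<alpha>)) \<longlongrightarrow> complex_of_real (\<Prod>k\<in>{1..n}. r k powr \<omega> k)) (at_right 0)"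
    unfolding M_def
    using lim_zero[where K="{1..n}" and \<omega>=\<omega> and r=r, OF fin2 wpos \<omega>_sum rpos] by (rule tendsto_of_real)
  hence L3: "((\<lambda>\<alpha>::real. alpha_sum (complex_of_real \<alpha>) I a)
            \<longlongrightarrow> complex_of_real (\<Prod>k\<in>{1..n}. r k powr \<omega> k)) (at_right 0)"
  proof -
    have E: "\<forall>\<^sub>F \<alpha> in at_right 0. (\<alpha>::real) \<noteq> 0"
      by (simp add: eventually_at_filter)
    show ?thesis by (rule iffD1[OF tendsto_cong[OF ev[OF E]] T2])
  qed
  have L4: "\<forall>\<alpha>::real. \<alpha> \<noteq> 0 \<longrightarrow> alpha_sum (complex_of_real \<alpha>) I a
            = complex_of_real ((\<Sum>k\<in>{1..n}. \<omega> k * r k powr \<alpha>) powr (1 / \<alpha>))"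
    using eq unfolding M_def by blast
  show ?thesis using L1 L2 L3 L4 by blast
qed

end
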